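(* Let $\epsilon > 0$ be a sufficiently small universal constant. For every $G \in \mathcal{G}_{2n}$, the number of graphs in $\mathcal{G}_{2n}$ that are $(1\pm3\epsilon)$-cut sparsifiers of $G$ is at most $2^{n^2/4}$.
   Context: Fix disjoint vertex sets $L,R$ with $|L|=|R|=n$ and a fixed perfect matching $M$ of directed edges from $L$ to $R$. $\mathcal{G}_{2n}$ is the set of all unweighted directed graphs on vertex set $V=L\cup R$ whose set of edges from $L$ to $R$ is exactly $M$, whose edges from $R$ to $L$ form an arbitrary subset of $R\times L$, and which have no other edges. For directed graphs $G,H$ on the same vertex set $V$, $H$ is a $(1\pm\delta)$-cut sparsifier of $G$ if for all $S\subseteq V$, $(1-\delta)w_G(S,V\setminus S)\le w_H(S,V\setminus S)\le(1+\delta)w_G(S,V\setminus S)$, where $w_G(S,T)$ is the total weight (here, number) of edges of $G$ from $S$ to $T$. *)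

theory Defs
  imports Complex_Main
begin

definition cut_weight :: "(nat \<times> nat) set \<Rightarrow> nat set \<Rightarrow> nat set \<Rightarrow> nat" where
  "cut_weight E S T = card {e \<in> E. fst e \<in> S \<and> snd e \<in> T}"

definition is_cut_sparsifier :: "nat set \<Rightarrow> real \<Rightarrow> (nat \<times> nat) set \<Rightarrow> (nat \<times> nat) set \<Rightarrow> bool" where
  "is_cut_sparsifier V \<delta> G H \<longleftrightarrow>
     (\<forall>S. S \<subseteq> V \<longrightarrow>
        (1 - \<delta>) * real (cut_weight G S (V - S)) \<le> real (cut_weight H S (V - S)) \<and>
        real (cut_weight H S (V - S)) \<le> (1 + \<delta>) * real (cut_weight G S (V - S)))"

definition perfect_matching :: "nat set \<Rightarrow> nat set \<Rightarrow> (nat \<times> nat) set \<Rightarrow> bool" where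
  "perfect_matching L R M \<longleftrightarrow> M \<subseteq> L \<times> R \<and>
     (\<forall>l\<in>L. \<exists>!r. (l, r) \<in> M) \<and> (\<forall>r\<in>R. \<exists>!l. (l, r) \<in> M)"

text \<open>The class G_{2n}: L-to-R edges exactly M, R-to-L edges arbitrary, nothing else.\<close>
definition graph_class :: "nat set \<Rightarrow> nat set \<Rightarrow> (nat \<times> nat) set \<Rightarrow> (nat \<times> nat) set set" where
  "graph_class L R M = {E. \<exists>B. B \<subseteq> R \<times> L \<and> E = M \<union> B}"

end

theory Submission
  imports Defs "HOL-Library.FuncSet"
begin


lemma card_small_subsets:
  assumes "finite L"
  shows "card {D. D \<subseteq> L \<and> card D \<le> k} \<le> (\<Sum>j\<le>k. card L choose j)"
proof -
  have "{D. D \<subseteq> L \<and> card D \<le> k} = (\<Union>j\<in>{..k}. {D. D \<subseteq> L \<and> card D = j})" by auto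
  hence "card {D. D \<subseteq> L \<and> card D \<le> k} \<le> (\<Sum>j\<le>k. card {D. D \<subseteq> L \<and> card D = j})"
    using card_UN_le[of "{..k}" "\<lambda>j. {D. D \<subseteq> L \<and> card D = j}"] by simp
  also have "\<dots> = (\<Sum>j\<le>k. card L choose j)" using n_subsets[OF assms] by simp
  finally show ?thesis .
qed

lemma card_near_subsets:
  assumes "finite L" "Y0 \<subseteq> L"
  shows "card {Y. Y \<subseteq> L \<and> card ((Y - Y0) \<union> (Y0 - Y)) \<le> k} \<le> (\<Sum>j\<le>k. card L choose j)"
proof -
  let ?f = "\<lambda>Y. (Y - Y0) \<union> (Y0 - Y)"
  have inj: "inj_on ?f {Y. Y \<subseteq> L \<and> card ((Y - Y0) \<union> (Y0 - Y)) \<le> k}"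
  proof (rule inj_onI)
    fix Y1 Y2 assume "?f Y1 = ?f Y2"
    moreover have "\<And>Y. Y = (?f Y - Y0) \<union> (Y0 - ?f Y)" by blast
    ultimately show "Y1 = Y2" by metis
  qed
  have sub: "?f ` {Y. Y \<subseteq> L \<and> card ((Y - Y0) \<union> (Y0 - Y)) \<le> k} \<subseteq> {D. D \<subseteq> L \<and> card D \<le> k}"
    using assms by auto
  have fin: "finite {D. D \<subseteq> L \<and> card D \<le> k}" using assms by auto
  have "card {Y. Y \<subseteq> L \<and> card ((Y - Y0) \<union> (Y0 - Y)) \<le> k} \<le> card {D. D \<subseteq> L \<and> card D \<le> k}"
    by (rule card_inj_on_le[OF inj sub fin])
  also have "\<dots> \<le> (\<Sum>j\<le>k. card L choose j)" by (rule card_small_subsets[OF assms(1)])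
  finally show ?thesis .
qed

lemma card_rowsets:
  assumes "finite L" "finite R" "\<And>r. r \<in> R \<Longrightarrow> Y0 r \<subseteq> L"
  shows "card {B. B \<subseteq> R \<times> L \<and> (\<forall>r\<in>R. card ({l\<in>L. (r,l)\<in>B} - Y0 r \<union> (Y0 r - {l\<in>L. (r,l)\<in>B})) \<le> k)}
     \<le> (\<Sum>j\<le>k. card L choose j) ^ card R"
proof -
  let ?S = "{B. B \<subseteq> R \<times> L \<and> (\<forall>r\<in>R. card ({l\<in>L. (r,l)\<in>B} - Y0 r \<union> (Y0 r - {l\<in>L. (r,l)\<in>B})) \<le> k)}"
  let ?F = "\<lambda>r. {Y. Y \<subseteq> L \<and> card ((Y - Y0 r) \<union> (Y0 r - Y)) \<le> k}"
  let ?g = "\<lambda>B. restrict (\<lambda>r. {l\<in>L. (r,l)\<in>B}) R"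
  have inj: "inj_on ?g ?S"
  proof (rule inj_onI)
    fix B1 B2 assume b1: "B1 \<in> ?S" and b2: "B2 \<in> ?S" and eq: "?g B1 = ?g B2"
    have rows: "{l\<in>L. (r,l)\<in>B1} = {l\<in>L. (r,l)\<in>B2}" if "r \<in> R" for r
    proof -
      have "?g B1 r = ?g B2 r" using eq by simp
      then show ?thesis using that by simp
    qed
    have s1: "B1 \<subseteq> R \<times> L" and s2: "B2 \<subseteq> R \<times> L" using b1 b2 by auto
    have key: "(a, b) \<in> B1 \<longleftrightarrow> (a, b) \<in> B2" for a b
    proof (cases "a \<in> R \<and> b \<in> L")
      case True
      then have "(b \<in> {l\<in>L. (a,l)\<in>B1}) = (b \<in> {l\<in>L. (a,l)\<in>B2})" using rows by simp
      then show ?thesis using True by simp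
    next
      case False
      then show ?thesis using s1 s2 by blast
    qed
    show "B1 = B2" using key by auto
  qed
  have sub: "?g ` ?S \<subseteq> PiE R ?F"
  proof
    fix x assume "x \<in> ?g ` ?S"
    then obtain B where B: "B \<in> ?S" and x: "x = ?g B" by blast
    show "x \<in> PiE R ?F" unfolding x
    proof (rule PiE_I)
      fix r assume r: "r \<in> R"
      have "card ({l\<in>L. (r,l)\<in>B} - Y0 r \<union> (Y0 r - {l\<in>L. (r,l)\<in>B})) \<le> k" using B r by (simp only: mem_Collect_eq)
      then show "?g B r \<in> ?F r" using r by simp
    next
      fix r assume "r \<notin> R" then show "?g B r = undefined" by simp
    qed
  qed
  have fin: "finite (PiE R ?F)" 
  proof (rule finite_PiE[OF assms(2)])
    fix r assume "r \<in> R"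
    show "finite (?F r)" by (rule finite_subset[of _ "Pow L"]) (use assms(1) in auto)
  qed
  have "card ?S \<le> card (PiE R ?F)" by (rule card_inj_on_le[OF inj sub fin])
  also have "\<dots> = (\<Prod>r\<in>R. card (?F r))" by (rule card_PiE[OF assms(2)])
  also have "\<dots> \<le> (\<Prod>r\<in>R. (\<Sum>j\<le>k. card L choose j))"

  proof (rule prod_mono)
    fix r assume "r \<in> R"
    then show "0 \<le> card (?F r) \<and> card (?F r) \<le> (\<Sum>j\<le>k. card L choose j)"
      using card_near_subsets[OF assms(1) assms(3)] by blast
  qed
  also have "\<dots> = (\<Sum>j\<le>k. card L choose j) ^ card R" by simp
  finally show ?thesis .
qed



lemma binsum_bound:
  fixes n k :: nat assumes "k \<le> n"
  shows "(\<Sum>j\<le>k. real (n choose j)) \<le> 32^k * (33/32)^n"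
proof -
  have "(\<Sum>j\<le>k. real (n choose j)) \<le> (\<Sum>j\<le>k. real (n choose j) * (32^k * (1/32)^j))"
  proof (rule sum_mono)
    fix j assume "j \<in> {..k}"
    then have jk: "j \<le> k" by simp
    have "(32::real)^k * (1/32)^j = 32^(k-j)"
      using jk by (simp add: power_diff power_one_over field_simps)
    moreover have "(1::real) \<le> 32^(k-j)" by simp
    then have "real (n choose j) * 1 \<le> real (n choose j) * 32^(k-j)"
      by (intro mult_left_mono) simp_all
    ultimately show "real (n choose j) \<le> real (n choose j) * (32^k * (1/32)^j)" by simp
  qed
  also have "\<dots> = 32^k * (\<Sum>j\<le>k. real (n choose j) * (1/32)^j)"
    by (simp add: sum_distrib_left mult_ac)
  also have "\<dots> \<le> 32^k * (\<Sum>j\<le>n. real (n choose j) * (1/32)^j)"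
    by (intro mult_left_mono sum_mono2) (use assms in auto)
  also have "(\<Sum>j\<le>n. real (n choose j) * (1/32)^j) = (1/32 + 1)^n"
    using binomial_ring[of "1/32::real" 1 n] by simp
  also have "(1/32 + 1::real) = 33/32" by simp
  finally show ?thesis by simp
qed

lemma final_arith:
  fixes n :: nat
  shows "real ((\<Sum>j\<le>n div 32. n choose j) ^ n) \<le> 2 powr (real n ^ 2 / 4)"
proof -
  define k where "k = n div 32"
  define A where "A = (\<Sum>j\<le>k. real (n choose j))"
  have kn: "k \<le> n" unfolding k_def by simp
  have k32: "32 * k \<le> n" unfolding k_def by simp
  have A1: "1 \<le> A" unfolding A_def
  proof -
    have "(\<Sum>j\<le>k. real (n choose j)) \<ge> (\<Sum>j\<in>{0}. real (n choose j))"
      by (rule sum_mono2) auto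
    then show "1 \<le> (\<Sum>j\<le>k. real (n choose j))" by simp
  qed
  have hA: "A \<le> 32^k * (33/32)^n" unfolding A_def by (rule binsum_bound[OF kn])
  have "A^32 \<le> (32^k * (33/32)^n)^32"
    by (rule power_mono[OF hA]) (use A1 in simp)
  also have "\<dots> = 2^(160*k) * ((33/32)^32)^n"
  proof -
    have e: "(32::real) = 2^5" by simp
    have "(((2::real)^5)^k)^32 = 2^(5*k*32)" by (simp only: power_mult)
    then have "((32::real)^k)^32 = 2^(160*k)" by simp
    moreover have "((33/32::real)^n)^32 = ((33/32)^32)^n" by (simp add: power_mult[symmetric] mult.commute)
    ultimately show ?thesis by (simp add: power_mult_distrib)
  qed
  also have "\<dots> \<le> 2^(5*n) * 4^n"
  proof (rule mult_mono)
    show "(2::real)^(160*k) \<le> 2^(5*n)" by (rule power_increasing) (use k32 in auto)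
    have "(33/32::real)^32 \<le> 4" by (simp add: power_divide)
    then show "((33/32::real)^32)^n \<le> 4^n" by (rule power_mono) simp
  qed auto
  also have "\<dots> \<le> 2^(8*n)"
  proof -
    have "(2::real)^(5*n) * 4^n = 2^(7*n)"
    proof -
      have "(4::real)^n = (2^2)^n" by simp
      also have "\<dots> = 2^(2*n)" by (simp only: power_mult)
      moreover have "(2::real)^(5*n) * 2^(2*n) = 2^(5*n + 2*n)" by (simp only: power_add)
      moreover have "5*n + 2*n = 7*n" by simp
      ultimately show ?thesis by simp
    qed
    also have "\<dots> \<le> 2^(8*n)" by (rule power_increasing) auto
    finally show ?thesis .
  qed
  finally have h32: "A^32 \<le> 2^(8*n)" .
  have "A = (A^32) powr (1/32)"
  proof -
    have "A^32 = A powr (real 32)" using A1 by (subst powr_realpow) auto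
    then have "(A^32) powr (1/32) = A powr (real 32 * (1/32))" by (simp add: powr_powr)
    also have "\<dots> = A" using A1 by simp
    finally show ?thesis by simp
  qed
  also have "\<dots> \<le> (2^(8*n)) powr (1/32)"
    by (rule powr_mono2) (use h32 A1 in auto)
  also have "\<dots> = 2 powr (real n / 4)"
  proof -
    have "(2::real)^(8*n) = 2 powr (real (8*n))" by (subst powr_realpow) auto
    then show ?thesis by (simp add: powr_powr)
  qed
  finally have hA2: "A \<le> 2 powr (real n / 4)" .
  have "A ^ n \<le> (2 powr (real n / 4)) ^ n"
    by (rule power_mono[OF hA2]) (use A1 in simp)
  also have "\<dots> = 2 powr (real n ^ 2 / 4)"
  proof -
    have "(2 powr (real n / 4)) ^ n = (2 powr (real n / 4)) powr (real n)" by (subst powr_realpow) auto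
    also have "\<dots> = 2 powr (real n / 4 * real n)" by (simp add: powr_powr)
    finally show ?thesis by (simp add: power2_eq_square)
  qed
  finally show ?thesis unfolding A_def k_def by simp
qed


lemma cut_split:
  assumes M: "M \<subseteq> L \<times> R" and B: "B \<subseteq> R \<times> L" and disj: "L \<inter> R = {}" and r: "r \<in> R"
    and Y: "Y \<subseteq> L" and fL: "finite L" and fR: "finite R"
  shows "cut_weight (M \<union> B) (insert r (L - Y)) ((L \<union> R) - insert r (L - Y)) =
    card {e\<in>M. fst e \<in> insert r (L - Y) \<and> snd e \<in> (L \<union> R) - insert r (L - Y)} + card {l\<in>Y. (r,l) \<in> M \<union> B}"
proof -
  let ?S = "insert r (L - Y)"
  let ?T = "(L \<union> R) - insert r (L - Y)"
  let ?A = "{e\<in>M. fst e \<in> ?S \<and> snd e \<in> ?T}"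
  let ?C = "Pair r ` {l\<in>Y. (r,l) \<in> M \<union> B}"
  have eq: "{e \<in> M \<union> B. fst e \<in> ?S \<and> snd e \<in> ?T} = ?A \<union> ?C"
  proof
    show "{e \<in> M \<union> B. fst e \<in> ?S \<and> snd e \<in> ?T} \<subseteq> ?A \<union> ?C"
    proof
      fix e assume e: "e \<in> {e \<in> M \<union> B. fst e \<in> ?S \<and> snd e \<in> ?T}"
      obtain a b where ab: "e = (a, b)" by (cases e)
      show "e \<in> ?A \<union> ?C"
      proof (cases "e \<in> M")
        case True then show ?thesis using e by blast
      next
        case False
        then have "e \<in> B" using e by blast
        then have "a \<in> R" "b \<in> L" using B ab by auto
        then have "a = r" "b \<in> Y" using e ab disj by auto
        then show ?thesis using e ab \<open>e \<in> B\<close> by blast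
      qed
    qed
  next
    show "?A \<union> ?C \<subseteq> {e \<in> M \<union> B. fst e \<in> ?S \<and> snd e \<in> ?T}"
    proof
      fix e assume e: "e \<in> ?A \<union> ?C"
      show "e \<in> {e \<in> M \<union> B. fst e \<in> ?S \<and> snd e \<in> ?T}"
      proof (cases "e \<in> ?A")
        case True then show ?thesis by blast
      next
        case False
        then obtain l where l: "l \<in> Y" "(r,l) \<in> M \<union> B" "e = (r,l)" using e by blast
        have "l \<in> L" using l Y by blast
        then have "l \<noteq> r" using r disj by blast
        then show ?thesis using l \<open>l \<in> L\<close> by auto
      qed
    qed
  qed
  have fA: "finite ?A"
    by (rule finite_subset[of _ "L \<times> R"]) (use M fL fR in auto)
  have fY: "finite Y" using Y fL finite_subset by blast
  have fC: "finite ?C" using fY by simp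
  have dis: "?A \<inter> ?C = {}" using M r disj by auto
  have "card ?C = card {l\<in>Y. (r,l) \<in> M \<union> B}" by (rule card_image) (simp add: inj_on_def)
  then show ?thesis unfolding cut_weight_def eq using card_Un_disjoint[OF fA fC dis] by simp
qed

lemma card_M:
  assumes "perfect_matching L R M" "finite L"
  shows "card M \<le> card L"
proof -
  have sub: "M \<subseteq> L \<times> R" and u: "\<forall>l\<in>L. \<exists>!r. (l, r) \<in> M" using assms unfolding perfect_matching_def by auto
  have "inj_on fst M"
  proof (rule inj_onI)
    fix x y assume x: "x \<in> M" and y: "y \<in> M" and f: "fst x = fst y"
    obtain a b where xa: "x = (a,b)" by (cases x)
    obtain c d where yc: "y = (c,d)" by (cases y)
    have "a = c" using f xa yc by simp
    have "a \<in> L" using x xa sub by auto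
    then have "b = d" using u x y xa yc \<open>a = c\<close> by metis
    then show "x = y" using xa yc \<open>a = c\<close> by simp
  qed
  moreover have "fst ` M \<subseteq> L" using sub by auto
  ultimately show ?thesis using card_inj_on_le assms(2) by blast
qed

lemma row_bound:
  fixes \<epsilon> :: real
  assumes eps: "0 < \<epsilon>" "\<epsilon> \<le> 1/300" and fL: "finite L" and fR: "finite R" and disj: "L \<inter> R = {}"
    and cL: "card L = n" and pm: "perfect_matching L R M"
    and G: "G \<in> graph_class L R M" and H: "H \<in> graph_class L R M"
    and sp: "is_cut_sparsifier (L \<union> R) (3 * \<epsilon>) G H" and r: "r \<in> R"
  shows "card ({l\<in>L. (r,l)\<in>H} - {l\<in>L. (r,l)\<in>G} \<union> ({l\<in>L. (r,l)\<in>G} - {l\<in>L. (r,l)\<in>H})) \<le> n div 32"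
proof -
  have M: "M \<subseteq> L \<times> R" using pm unfolding perfect_matching_def by auto
  obtain BG where BG: "BG \<subseteq> R \<times> L" "G = M \<union> BG" using G unfolding graph_class_def by auto
  obtain BH where BH: "BH \<subseteq> R \<times> L" "H = M \<union> BH" using H unfolding graph_class_def by auto
  have cM: "card M \<le> n" using card_M[OF pm fL] cL by simp
  define c where "c Y = card {e\<in>M. fst e \<in> insert r (L - Y) \<and> snd e \<in> (L \<union> R) - insert r (L - Y)}" for Y
  have cle: "c Y \<le> n" for Y
  proof -
    have "c Y \<le> card M" unfolding c_def
      by (rule card_mono) (use M fL fR finite_subset[of M "L \<times> R"] in auto)
    then show ?thesis using cM by simp
  qed
  have key: "(1 - 3*\<epsilon>) * real (c Y + card {l\<in>Y. (r,l)\<in>G}) \<le> real (c Y + card {l\<in>Y. (r,l)\<in>H}) \<and>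
        real (c Y + card {l\<in>Y. (r,l)\<in>H}) \<le> (1 + 3*\<epsilon>) * real (c Y + card {l\<in>Y. (r,l)\<in>G})"
    if Y: "Y \<subseteq> L" for Y
  proof -
    have S: "insert r (L - Y) \<subseteq> L \<union> R" using r by auto
    have cG: "cut_weight G (insert r (L - Y)) ((L \<union> R) - insert r (L - Y)) = c Y + card {l\<in>Y. (r,l)\<in>G}"
      unfolding c_def BG(2) by (rule cut_split[OF M BG(1) disj r Y fL fR])
    have cH: "cut_weight H (insert r (L - Y)) ((L \<union> R) - insert r (L - Y)) = c Y + card {l\<in>Y. (r,l)\<in>H}"
      unfolding c_def BH(2) by (rule cut_split[OF M BH(1) disj r Y fL fR])
    have "(1 - 3*\<epsilon>) * real (cut_weight G (insert r (L - Y)) ((L \<union> R) - insert r (L - Y)))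
          \<le> real (cut_weight H (insert r (L - Y)) ((L \<union> R) - insert r (L - Y))) \<and>
          real (cut_weight H (insert r (L - Y)) ((L \<union> R) - insert r (L - Y)))
          \<le> (1 + 3*\<epsilon>) * real (cut_weight G (insert r (L - Y)) ((L \<union> R) - insert r (L - Y)))"
      using sp S unfolding is_cut_sparsifier_def by blast
    then show ?thesis unfolding cG cH .
  qed
  define P where "P = {l\<in>L. (r,l)\<in>H} - {l\<in>L. (r,l)\<in>G}"
  define N where "N = {l\<in>L. (r,l)\<in>G} - {l\<in>L. (r,l)\<in>H}"
  have PL: "P \<subseteq> L" and NL: "N \<subseteq> L" unfolding P_def N_def by auto
  have fP: "finite P" and fN: "finite N" using PL NL fL finite_subset by auto
  have gP: "{l\<in>P. (r,l)\<in>G} = {}" and hP: "{l\<in>P. (r,l)\<in>H} = P" unfolding P_def by auto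
  have gN: "{l\<in>N. (r,l)\<in>G} = N" and hN: "{l\<in>N. (r,l)\<in>H} = {}" unfolding N_def by auto
  have e3: "3 * \<epsilon> * real n \<le> real n / 100"
  proof -
    have "3 * \<epsilon> * real n \<le> (1/100) * real n" by (rule mult_right_mono) (use eps in auto)
    then show ?thesis by simp
  qed
  have p: "real (card P) \<le> real n / 100"
  proof -
    have "real (c P + card P) \<le> (1 + 3*\<epsilon>) * real (c P)" using key[OF PL] gP hP by simp
    then have "real (card P) \<le> 3*\<epsilon> * real (c P)" by (simp add: algebra_simps)
    also have "\<dots> \<le> 3*\<epsilon> * real n" by (rule mult_left_mono) (use cle[of P] eps in auto)
    finally show ?thesis using e3 by linarith
  qed
  have q: "real (card N) \<le> real n / 99"
  proof -
    have "(1 - 3*\<epsilon>) * real (c N + card N) \<le> real (c N)" using key[OF NL] gN hN by simp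
    then have "real (card N) * (1 - 3*\<epsilon>) \<le> 3*\<epsilon> * real (c N)" by (simp add: algebra_simps)
    also have "\<dots> \<le> 3*\<epsilon> * real n" by (rule mult_left_mono) (use cle[of N] eps in auto)
    also have "\<dots> \<le> real n / 100" by (rule e3)
    finally have a: "real (card N) * (1 - 3*\<epsilon>) \<le> real n / 100" .
    have "real (card N) * (99/100) \<le> real (card N) * (1 - 3*\<epsilon>)"
      by (rule mult_left_mono) (use eps in auto)
    then show ?thesis using a by linarith
  qed
  have "card (P \<union> N) \<le> card P + card N" by (rule card_Un_le)
  then have "real (card (P \<union> N)) \<le> real n / 100 + real n / 99" using p q by linarith
  also have "\<dots> \<le> real n / 32" by simp
  finally have "real (32 * card (P \<union> N)) \<le> real n" by simp
  then have "32 * card (P \<union> N) \<le> n" by linarith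
  then have "card (P \<union> N) \<le> n div 32" by (simp add: less_eq_div_iff_mult_less_eq mult.commute)
  then show ?thesis unfolding P_def N_def .
qed


lemma graph_class_decomp:
  assumes "H \<in> graph_class L R M" "perfect_matching L R M" "L \<inter> R = {}"
  shows "H = M \<union> (H \<inter> (R \<times> L))"
proof -
  have M: "M \<subseteq> L \<times> R" using assms(2) unfolding perfect_matching_def by auto
  obtain B where B: "B \<subseteq> R \<times> L" "H = M \<union> B" using assms(1) unfolding graph_class_def by auto
  have "M \<inter> (R \<times> L) = {}" using M assms(3) by blast
  then have "H \<inter> (R \<times> L) = B" using B by blast
  then show ?thesis using B by simp
qed

theorem lemma6:
  shows "\<exists>\<epsilon>0 > 0. \<forall>\<epsilon>::real. 0 < \<epsilon> \<and> \<epsilon> \<le> \<epsilon>0 \<longrightarrow>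
     (\<forall>(n::nat) L R M G.
        finite L \<and> finite R \<and> L \<inter> R = {} \<and> card L = n \<and> card R = n \<and>
        perfect_matching L R M \<and> G \<in> graph_class L R M \<longrightarrow>
        real (card {H \<in> graph_class L R M. is_cut_sparsifier (L \<union> R) (3 * \<epsilon>) G H})
          \<le> 2 powr (real n ^ 2 / 4))"
proof (intro exI[of _ "1/300::real"] conjI allI impI)
  show "(0::real) < 1/300" by simp
next
  fix \<epsilon> :: real and n :: nat and L R :: "nat set" and M G :: "(nat \<times> nat) set"
  assume eps: "0 < \<epsilon> \<and> \<epsilon> \<le> 1/300"
  assume A: "finite L \<and> finite R \<and> L \<inter> R = {} \<and> card L = n \<and> card R = n \<and>
        perfect_matching L R M \<and> G \<in> graph_class L R M"
  then have fL: "finite L" and fR: "finite R" and disj: "L \<inter> R = {}" and cL: "card L = n"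
    and cR: "card R = n" and pm: "perfect_matching L R M" and G: "G \<in> graph_class L R M" by auto
  let ?Hs = "{H \<in> graph_class L R M. is_cut_sparsifier (L \<union> R) (3 * \<epsilon>) G H}"
  define Y0 where "Y0 r = {l\<in>L. (r,l)\<in>G}" for r
  let ?Rows = "{B. B \<subseteq> R \<times> L \<and> (\<forall>r\<in>R. card ({l\<in>L. (r,l)\<in>B} - Y0 r \<union> (Y0 r - {l\<in>L. (r,l)\<in>B})) \<le> n div 32)}"
  let ?f = "\<lambda>H. H \<inter> (R \<times> L)"
  have inj: "inj_on ?f ?Hs"
  proof (rule inj_onI)
    fix H1 H2 assume h1: "H1 \<in> ?Hs" and h2: "H2 \<in> ?Hs" and eq: "?f H1 = ?f H2"
    have "H1 = M \<union> ?f H1" using h1 graph_class_decomp[OF _ pm disj] by blast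
    moreover have "H2 = M \<union> ?f H2" using h2 graph_class_decomp[OF _ pm disj] by blast
    ultimately show "H1 = H2" using eq by simp
  qed
  have sub: "?f ` ?Hs \<subseteq> ?Rows"
  proof
    fix x assume "x \<in> ?f ` ?Hs"
    then obtain H where H: "H \<in> graph_class L R M" and sp: "is_cut_sparsifier (L \<union> R) (3 * \<epsilon>) G H"
      and x: "x = ?f H" by blast
    have "\<forall>r\<in>R. card ({l\<in>L. (r,l)\<in>x} - Y0 r \<union> (Y0 r - {l\<in>L. (r,l)\<in>x})) \<le> n div 32"
    proof
      fix r assume r: "r \<in> R"
      have rows: "{l\<in>L. (r,l)\<in>x} = {l\<in>L. (r,l)\<in>H}" using r x by auto
      show "card ({l\<in>L. (r,l)\<in>x} - Y0 r \<union> (Y0 r - {l\<in>L. (r,l)\<in>x})) \<le> n div 32"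
        unfolding rows Y0_def
        by (rule row_bound[of \<epsilon> L R n M G H r]) (use eps fL fR disj cL pm G H sp r in auto)
    qed
    moreover have "x \<subseteq> R \<times> L" using x by auto
    ultimately show "x \<in> ?Rows" by blast
  qed
  have fin: "finite ?Rows"
    by (rule finite_subset[of _ "Pow (R \<times> L)"]) (use fL fR in auto)
  have "card ?Hs \<le> card ?Rows" by (rule card_inj_on_le[OF inj sub fin])
  also have "\<dots> \<le> (\<Sum>j\<le>n div 32. card L choose j) ^ card R"
    by (rule card_rowsets[OF fL fR]) (auto simp: Y0_def)
  also have "\<dots> = (\<Sum>j\<le>n div 32. n choose j) ^ n" using cL cR by simp
  finally have "real (card ?Hs) \<le> real ((\<Sum>j\<le>n div 32. n choose j) ^ n)" by linarith
  also have "\<dots> \<le> 2 powr (real n ^ 2 / 4)" by (rule final_arith)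
  finally show "real (card ?Hs) \<le> 2 powr (real n ^ 2 / 4)" .
qed

end
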